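(* Let $\alpha>0$, $\hbar>0$, $\sigma>0$, let $n\geq2$ be an integer, and let $N_G=\sqrt{2/(\sigma^{2n+1}\Gamma(n+\frac12))}$. For $\tau\in\mathbb{R}$ define $$E(\tau)=\frac{\alpha}{\hbar}N_G^{2}\int_{0}^{\infty}dp'\int_{0}^{\infty}dp\,(-1)^{2n-1}p'^{\,n}p^{\,n-1}e^{-\frac{1}{2\sigma^{2}}\left(p^{2}+p'^{2}\right)}\sin\!\left(\frac{\alpha^{2}\tau}{\hbar}\left(\frac{1}{p'}-\frac{1}{p}\right)\right)\mathrm{sgn}(p'-p).$$ Then: (i) $E(0)=0$; (ii) $E$ is differentiable at $0$ and $\frac{dE}{d\tau}(0)>0$; (iii) $E(-\tau)=-E(\tau)$ for all $\tau\in\mathbb{R}$; (iv) $\lim_{\tau\to\pm\infty}E(\tau)=0$.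
   Context: $E(\tau)$ is the real part of the expectation value of the gauge-invariant expansion scalar of radial null geodesics in the Schwarzschild interior, with clock operator $\hat T=\hat b$, evaluated on the physical state $\psi_n(p_a)=N_G\Theta(-p_a)p_a^{n}e^{-p_a^{2}/(2\sigma^{2})}$ (after the substitution $p_a\to-p_a$). Properties (i)–(iii) express a vanishing and sign change of the expansion at $\tau=0$ (a black-hole-to-white-hole bounce). *)

theory Defs
  imports "HOL-Analysis.Analysis"
begin

definition NG :: "real \<Rightarrow> nat \<Rightarrow> real" where
  "NG \<sigma> n = sqrt (2 / (\<sigma> ^ (2*n+1) * Gamma (real n + 1/2)))"

definition Eexp :: "real \<Rightarrow> real \<Rightarrow> real \<Rightarrow> nat \<Rightarrow> real \<Rightarrow> real" where
  "Eexp \<alpha> hb \<sigma> n \<tau> =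
     \<alpha> / hb * (NG \<sigma> n)\<^sup>2 *
     (LINT p':{0<..}|lborel. (LINT p:{0<..}|lborel.
        (-1) ^ (2*n-1) * p' ^ n * p ^ (n-1) * exp (- (p\<^sup>2 + p'\<^sup>2) / (2 * \<sigma>\<^sup>2))
        * sin (\<alpha>\<^sup>2 * \<tau> / hb * (1/p' - 1/p)) * sgn (p' - p)))"

end

theory Submission
  imports Defs "HOL-Probability.Distributions" "HOL-Real_Asymp.Real_Asymp"
begin

lemma gauss_int:
  assumes s: "s > 0"
  shows "integrable lborel (\<lambda>x::real. x ^ k * exp (- x\<^sup>2 / s))"
proof -
  define gs where "gs = sqrt (s/2)"
  have gs: "gs > 0" "2 * gs\<^sup>2 = s" using s by (auto simp: gs_def)
  have int: "integrable lborel (\<lambda>x. sqrt (2*pi*gs\<^sup>2) * (normal_density 0 gs x * (x - 0)^k))"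
    using integrable_normal_moment[OF gs(1), of 0 k] by (rule integrable_mult_right)
  have eq: "sqrt (2*pi*gs\<^sup>2) * (normal_density 0 gs x * (x - 0)^k) = x ^ k * exp (- x\<^sup>2 / s)" for x
  proof -
    have c: "sqrt (2*pi*gs\<^sup>2) \<noteq> 0" using gs by auto
    have "sqrt (2*pi*gs\<^sup>2) * (normal_density 0 gs x * (x - 0)^k)
       = (sqrt (2*pi*gs\<^sup>2) * (1 / sqrt (2*pi*gs\<^sup>2))) * (exp (- (x - 0)\<^sup>2 / (2 * gs\<^sup>2)) * (x - 0)^k)"
      unfolding normal_density_def by (simp only: mult_ac)
    also have "\<dots> = x ^ k * exp (- x\<^sup>2 / s)" using c gs(2) by simp
    finally show ?thesis .
  qed
  from int show ?thesis unfolding eq .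
qed

lemma gauss_set_int:
  assumes s: "s > 0" and A: "A \<in> sets lborel"
  shows "set_integrable lborel A (\<lambda>x::real. x ^ k * exp (- x\<^sup>2 / s))"
  unfolding set_integrable_def using integrable_mult_indicator[OF A gauss_int[OF s]] .

lemma sbound:
  fixes f g :: "real \<Rightarrow> real"
  assumes g: "set_integrable lborel B g" and AB: "A \<subseteq> B"
    and g0: "\<And>x. x \<in> B \<Longrightarrow> 0 \<le> g x" and fg: "\<And>x. x \<in> A \<Longrightarrow> \<bar>f x\<bar> \<le> g x"
  shows "\<bar>LINT x:A|lborel. f x\<bar> \<le> (LINT x:B|lborel. g x)"
proof -
  have pw: "\<bar>indicator A x * f x\<bar> \<le> indicator B x * g x" for x
    using AB g0 fg by (auto simp: indicator_def)
  show ?thesis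
  proof (cases "integrable lborel (\<lambda>x. indicator A x *\<^sub>R f x)")
    case True
    then show ?thesis unfolding set_lebesgue_integral_def
      using g unfolding set_integrable_def
      by (intro integral_abs_bound_integral) (auto intro: pw)
  next
    case False
    then have "(LINT x:A|lborel. f x) = 0"
      unfolding set_lebesgue_integral_def by (rule not_integrable_integral_eq)
    moreover have "0 \<le> (LINT x:B|lborel. g x)"
      unfolding set_lebesgue_integral_def
      by (rule Bochner_Integration.integral_nonneg) (use g0 in \<open>auto simp: indicator_def\<close>)
    ultimately show ?thesis by simp
  qed
qed

lemma spos:
  fixes f :: "real \<Rightarrow> real"
  assumes f: "set_integrable lborel {0<..} f"
    and nn: "\<And>x. 0 < x \<Longrightarrow> 0 \<le> f x" and pos: "\<And>x. 0 < x \<Longrightarrow> x \<noteq> z \<Longrightarrow> 0 < f x"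
  shows "0 < (LINT x:{0<..}|lborel. f x)"
proof -
  let ?F = "\<lambda>x. indicator {0<..} x *\<^sub>R f x"
  have i: "integrable lborel ?F" using f unfolding set_integrable_def .
  have n: "AE x in lborel. 0 \<le> ?F x" using nn by (auto simp: indicator_def)
  have ge: "0 \<le> (LINT x:{0<..}|lborel. f x)"
    unfolding set_lebesgue_integral_def by (rule integral_nonneg_AE[OF n])
  show ?thesis
  proof (rule ccontr)
    assume "\<not> ?thesis"
    with ge have "integral\<^sup>L lborel ?F = 0" unfolding set_lebesgue_integral_def by simp
    then have "AE x in lborel. ?F x = 0" using integral_nonneg_eq_0_iff_AE[OF i n] by simp
    moreover have "AE x in lborel. x \<noteq> z" by (rule AE_lborel_singleton)
    ultimately have "AE x in lborel. x \<notin> {max z 0 + 1 .. max z 0 + 2}"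
    proof eventually_elim
      case (elim x)
      show ?case
      proof
        assume "x \<in> {max z 0 + 1 .. max z 0 + 2}"
        then have "0 < x" "x \<noteq> z" by auto
        with pos[of x] elim(1) show False by (simp add: indicator_def)
      qed
    qed
    then have "emeasure lborel {x \<in> space lborel. \<not> x \<notin> {max z 0 + 1 .. max z 0 + 2}} = 0"
      using AE_iff_measurable[OF _ refl, of lborel "\<lambda>x. x \<notin> {max z 0 + 1 .. max z 0 + 2}"] by auto
    moreover have "{x \<in> space lborel. \<not> x \<notin> {max z 0 + 1 .. max z 0 + 2}} = {max z 0 + 1 .. max z 0 + 2}"
      by auto
    ultimately show False by simp
  qed
qed

lemma dct_at0:
  fixes s :: "real \<Rightarrow> real \<Rightarrow> real" and f w :: "real \<Rightarrow> real"
  assumes ms: "\<And>t. t \<noteq> 0 \<Longrightarrow> set_borel_measurable lborel A (s t)"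
    and mf: "set_borel_measurable lborel A f"
    and w: "set_integrable lborel A w"
    and lim: "\<And>x. x \<in> A \<Longrightarrow> ((\<lambda>t. s t x) \<longlongrightarrow> f x) (at 0)"
    and bnd: "\<And>t x. t \<noteq> 0 \<Longrightarrow> x \<in> A \<Longrightarrow> \<bar>s t x\<bar> \<le> w x"
  shows "((\<lambda>t. LINT x:A|lborel. s t x) \<longlongrightarrow> (LINT x:A|lborel. f x)) (at 0)"
    and "set_integrable lborel A f"
proof -
  obtain X :: "nat \<Rightarrow> real" where X: "\<And>i. X i \<noteq> 0" "X \<longlonglongrightarrow> 0"
  proof
    show "\<And>i. 1 / (real i + 1) \<noteq> 0" by simp
    show "(\<lambda>i. 1 / (real i + 1)) \<longlonglongrightarrow> 0" by real_asymp
  qed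
  have "integrable lborel (\<lambda>x. indicator A x *\<^sub>R f x)"
  proof (rule integrable_dominated_convergence)
    show "(\<lambda>x. indicator A x *\<^sub>R f x) \<in> borel_measurable lborel"
      using mf unfolding set_borel_measurable_def .
    show "(\<lambda>x. indicator A x *\<^sub>R s (X i) x) \<in> borel_measurable lborel" for i
      using ms[OF X(1)] unfolding set_borel_measurable_def .
    show "integrable lborel (\<lambda>x. indicator A x *\<^sub>R w x)" using w unfolding set_integrable_def .
    show "AE x in lborel. (\<lambda>i. indicator A x *\<^sub>R s (X i) x) \<longlonglongrightarrow> indicator A x *\<^sub>R f x"
    proof (rule AE_I2)
      fix x
      show "(\<lambda>i. indicator A x *\<^sub>R s (X i) x) \<longlonglongrightarrow> indicator A x *\<^sub>R f x"
      proof (cases "x \<in> A")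
        case True
        have "((\<lambda>t. s t x) \<circ> X) \<longlonglongrightarrow> f x"
          using lim[OF True] X unfolding tendsto_at_iff_sequentially by auto
        then show ?thesis using True by (simp add: o_def)
      qed simp
    qed
    show "AE x in lborel. norm (indicator A x *\<^sub>R s (X i) x) \<le> indicator A x *\<^sub>R w x" for i
      using bnd[OF X(1)] by (auto simp: indicator_def)
  qed
  then show "set_integrable lborel A f" unfolding set_integrable_def .
  show "((\<lambda>t. LINT x:A|lborel. s t x) \<longlongrightarrow> (LINT x:A|lborel. f x)) (at 0)"
    unfolding tendsto_at_iff_sequentially
  proof (intro allI impI)
    fix Y :: "nat \<Rightarrow> real"
    assume Y: "\<forall>i. Y i \<in> UNIV - {0}" "Y \<longlonglongrightarrow> 0"
    then have Y0: "Y i \<noteq> 0" for i by auto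
    show "((\<lambda>t. LINT x:A|lborel. s t x) \<circ> Y) \<longlonglongrightarrow> (LINT x:A|lborel. f x)"
      unfolding o_def set_lebesgue_integral_def
    proof (rule integral_dominated_convergence)
      show "(\<lambda>x. indicator A x *\<^sub>R f x) \<in> borel_measurable lborel"
        using mf unfolding set_borel_measurable_def .
      show "(\<lambda>x. indicator A x *\<^sub>R s (Y i) x) \<in> borel_measurable lborel" for i
        using ms[OF Y0] unfolding set_borel_measurable_def .
      show "integrable lborel (\<lambda>x. indicator A x *\<^sub>R w x)" using w unfolding set_integrable_def .
      show "AE x in lborel. (\<lambda>i. indicator A x *\<^sub>R s (Y i) x) \<longlonglongrightarrow> indicator A x *\<^sub>R f x"
      proof (rule AE_I2)
        fix x
        show "(\<lambda>i. indicator A x *\<^sub>R s (Y i) x) \<longlonglongrightarrow> indicator A x *\<^sub>R f x"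
        proof (cases "x \<in> A")
          case True
          have "((\<lambda>t. s t x) \<circ> Y) \<longlonglongrightarrow> f x"
            using lim[OF True] Y unfolding tendsto_at_iff_sequentially by auto
          then show ?thesis using True by (simp add: o_def)
        qed simp
      qed
      show "AE x in lborel. norm (indicator A x *\<^sub>R s (Y i) x) \<le> indicator A x *\<^sub>R w x" for i
        using bnd[OF Y0] by (auto simp: indicator_def)
    qed
  qed
qed

definition Psi :: "nat \<Rightarrow> real \<Rightarrow> real \<Rightarrow> real" where
 "Psi n \<sigma> L = (LINT p':{0<..}|lborel. (LINT p:{0<..}|lborel.
        (-1) ^ (2*n-1) * p' ^ n * p ^ (n-1) * exp (- (p\<^sup>2 + p'\<^sup>2) / (2 * \<sigma>\<^sup>2))
        * sin (L * (1/p' - 1/p)) * sgn (p' - p)))"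

lemma Eexp_Psi: "Eexp \<alpha> hb \<sigma> n \<tau> = \<alpha> / hb * (NG \<sigma> n)\<^sup>2 * Psi n \<sigma> (\<alpha>\<^sup>2 * \<tau> / hb)"
  unfolding Eexp_def Psi_def ..

definition Jf :: "nat \<Rightarrow> real \<Rightarrow> real \<Rightarrow> real \<Rightarrow> real" where
 "Jf n s L q = (LINT p:{0<..}|lborel. p^(n-1) * exp(-p\<^sup>2/s) * sin(L*(1/q-1/p)) * sgn(q-p))"

lemma set_integral_minus': "(LINT x:A|M. - f x) = - (LINT x:A|M. (f x::real))"
  unfolding set_lebesgue_integral_def by simp

lemma Psi_J:
  assumes "n \<ge> 1"
  shows "Psi n \<sigma> L = - (LINT q:{0<..}|lborel. q^n * exp(-q\<^sup>2/(2*\<sigma>\<^sup>2)) * Jf n (2*\<sigma>\<^sup>2) L q)"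
proof -
  have m1: "(-1::real) ^ (2*n-1) = -1" using assms by (simp add: power_minus1_odd)
  have pw: "(-1) ^ (2*n-1) * q ^ n * p ^ (n-1) * exp (- (p\<^sup>2 + q\<^sup>2) / (2 * \<sigma>\<^sup>2))
        * sin (L * (1/q - 1/p)) * sgn (q - p)
      = (- (q^n * exp(-q\<^sup>2/(2*\<sigma>\<^sup>2)))) * (p^(n-1) * exp(-p\<^sup>2/(2*\<sigma>\<^sup>2)) * sin(L*(1/q-1/p)) * sgn(q-p))"
    for p q :: real
  proof -
    have "exp (- (p\<^sup>2 + q\<^sup>2) / (2 * \<sigma>\<^sup>2)) = exp(-p\<^sup>2/(2*\<sigma>\<^sup>2)) * exp(-q\<^sup>2/(2*\<sigma>\<^sup>2))"
      by (simp add: exp_add[symmetric] diff_divide_distrib)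
    then show ?thesis unfolding m1 by (simp add: mult_ac)
  qed
  show ?thesis
    unfolding Psi_def pw set_integral_mult_right Jf_def
    by (simp add: set_integral_minus')
qed

lemma Jf_odd: "Jf n s (-L) q = - Jf n s L q"
  unfolding Jf_def by (simp add: set_integral_minus'[symmetric])

lemma Psi_odd: assumes "n \<ge> 1" shows "Psi n \<sigma> (-L) = - Psi n \<sigma> L"
  unfolding Psi_J[OF assms] Jf_odd by (simp add: set_integral_minus')

lemma Psi_0: "Psi n \<sigma> 0 = 0"
  unfolding Psi_def by simp

lemma int_by:
  fixes f g :: "real \<Rightarrow> real"
  assumes "set_integrable lborel A g" "set_borel_measurable lborel A f" "\<And>x. x \<in> A \<Longrightarrow> \<bar>f x\<bar> \<le> g x"
  shows "set_integrable lborel A f"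
  using assms(1,2) by (rule set_integrable_bound) (use assms(3) in \<open>auto intro!: AE_I2 order_trans[OF _ abs_ge_self]\<close>)

lemma G_deriv:
  fixes q s L p :: real
  assumes n: "n \<ge> 1" and s: "s > 0" and p: "p > 0" and L: "L \<noteq> 0"
  shows "((\<lambda>p. p^(n+1) * exp(-p\<^sup>2/s) * cos(L*(1/q-1/p)) / L) has_real_derivative
     ((real (n+1) * (p^n * exp(-p\<^sup>2/s)) - 2/s * (p^(n+2) * exp(-p\<^sup>2/s))) * cos(L*(1/q-1/p)) / L
       - p^(n-1) * exp(-p\<^sup>2/s) * sin(L*(1/q-1/p)))) (at p)"
proof -
  have d1: "((\<lambda>p. p^(n+1) * exp(-p\<^sup>2/s)) has_real_derivative
      (real (n+1) * (p^n * exp(-p\<^sup>2/s)) - 2/s * (p^(n+2) * exp(-p\<^sup>2/s)))) (at p)"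
    apply (rule derivative_eq_intros refl | use s p in force)+
    done
  have d2: "((\<lambda>p. cos(L*(1/q-1/p))) has_real_derivative (- sin(L*(1/q-1/p)) * (L / p\<^sup>2))) (at p)"
    apply (rule derivative_eq_intros refl | use s p in force)+
    using s p by (simp add: field_simps power2_eq_square)
  have d3: "((\<lambda>p. p^(n+1) * exp(-p\<^sup>2/s) * cos(L*(1/q-1/p)) / L) has_real_derivative
     ((real (n+1) * (p^n * exp(-p\<^sup>2/s)) - 2/s * (p^(n+2) * exp(-p\<^sup>2/s))) * cos(L*(1/q-1/p))
      + (- sin(L*(1/q-1/p)) * (L / p\<^sup>2)) * (p^(n+1) * exp(-p\<^sup>2/s))) / L) (at p)"
    by (rule DERIV_cdivide[OF DERIV_mult[OF d1 d2]])
  have eq: "p^(n+1) = p^(n-1) * p\<^sup>2" using n by (cases n) (auto simp: power2_eq_square)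
  have val: "((real (n+1) * (p^n * exp(-p\<^sup>2/s)) - 2/s * (p^(n+2) * exp(-p\<^sup>2/s))) * cos(L*(1/q-1/p))
      + (- sin(L*(1/q-1/p)) * (L / p\<^sup>2)) * (p^(n+1) * exp(-p\<^sup>2/s))) / L
     = (real (n+1) * (p^n * exp(-p\<^sup>2/s)) - 2/s * (p^(n+2) * exp(-p\<^sup>2/s))) * cos(L*(1/q-1/p)) / L
       - p^(n-1) * exp(-p\<^sup>2/s) * sin(L*(1/q-1/p))"
    unfolding eq using L p by (simp add: field_simps power2_eq_square)
  show ?thesis
    using d3 unfolding val .
qed

definition Ub :: "nat \<Rightarrow> real \<Rightarrow> real" where
  "Ub n s = (LINT p:{0<..}|lborel. real(n+1) * (p^n * exp(-p\<^sup>2/s)) + 2/s * (p^(n+2) * exp(-p\<^sup>2/s)))"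

lemma Jf_bound:
  assumes n: "n \<ge> 1" and s: "s > 0" and L: "L \<noteq> 0" and q: "q > 0"
  shows "\<bar>Jf n s L q\<bar> \<le> (2 * Ub n s + 2 * (q^(n+1) * exp(-q\<^sup>2/s))) / \<bar>L\<bar>"
proof -
  define G where "G = (\<lambda>p::real. p^(n+1) * exp(-p\<^sup>2/s) * cos(L*(1/q-1/p)) / L)"
  define u where "u = (\<lambda>p::real. real (n+1) * (p^n * exp(-p\<^sup>2/s)) - 2/s * (p^(n+2) * exp(-p\<^sup>2/s)))"
  define U0 where "U0 = (\<lambda>p::real. real(n+1) * (p^n * exp(-p\<^sup>2/s)) + 2/s * (p^(n+2) * exp(-p\<^sup>2/s)))"
  define hs where "hs = (\<lambda>p::real. p^(n-1) * exp(-p\<^sup>2/s) * sin(L*(1/q-1/p)))"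
  define uc where "uc = (\<lambda>p::real. u p * cos(L*(1/q-1/p)) / L)"
  define f where "f = (\<lambda>p::real. uc p - hs p)"
  have Gd: "(G has_vector_derivative f p) (at p)" if "p > 0" for p
    using G_deriv[OF n s that L, of q] unfolding has_real_derivative_iff_has_vector_derivative
    by (simp add: G_def f_def uc_def u_def hs_def)
  have fc: "isCont f p" if "p > 0" for p
    unfolding f_def uc_def u_def hs_def using that s L by (intro continuous_intros) auto
  have Gc: "isCont G p" if "p > 0" for p
    unfolding G_def using that s L by (intro continuous_intros) auto
  have U0i: "set_integrable lborel {0<..} U0"
    unfolding U0_def by (intro set_integral_add(1) set_integrable_mult_right gauss_set_int s) auto
  have U0nn: "0 \<le> U0 p" if "p > 0" for p
    unfolding U0_def using that s by (intro add_nonneg_nonneg mult_nonneg_nonneg) auto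
  have Ub: "Ub n s = (LINT p:{0<..}|lborel. U0 p)" unfolding Ub_def U0_def ..
  have ule: "\<bar>u p\<bar> \<le> U0 p" if "p > 0" for p
  proof -
    have "0 \<le> real (n+1) * (p^n * exp(-p\<^sup>2/s))" "0 \<le> 2/s * (p^(n+2) * exp(-p\<^sup>2/s))"
      using that s by auto
    then show ?thesis unfolding u_def U0_def by linarith
  qed
  have ucle: "\<bar>uc p\<bar> \<le> U0 p / \<bar>L\<bar>" if "p > 0" for p
  proof -
    have "\<bar>uc p\<bar> = \<bar>u p\<bar> * \<bar>cos(L*(1/q-1/p))\<bar> / \<bar>L\<bar>" unfolding uc_def by (simp add: abs_mult)
    also have "\<dots> \<le> \<bar>u p\<bar> * 1 / \<bar>L\<bar>"
      by (intro divide_right_mono mult_left_mono) auto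
    also have "\<dots> \<le> U0 p / \<bar>L\<bar>" using ule[OF that] by (simp add: divide_right_mono)
    finally show ?thesis .
  qed
  have hsle: "\<bar>hs p\<bar> \<le> p^(n-1) * exp(-p\<^sup>2/s)" if "p > 0" for p
  proof -
    have "\<bar>hs p\<bar> = p^(n-1) * exp(-p\<^sup>2/s) * \<bar>sin(L*(1/q-1/p))\<bar>"
      unfolding hs_def using that by (simp add: abs_mult)
    also have "\<dots> \<le> p^(n-1) * exp(-p\<^sup>2/s) * 1"
      by (intro mult_left_mono) (use that in auto)
    finally show ?thesis by simp
  qed
  have muc: "set_borel_measurable lborel A uc" if [measurable]: "A \<in> sets borel" for A
    unfolding set_borel_measurable_def uc_def u_def by measurable
  have mhs: "set_borel_measurable lborel A hs" if [measurable]: "A \<in> sets borel" for A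
    unfolding set_borel_measurable_def hs_def by measurable
  have mk: "set_borel_measurable lborel A (\<lambda>p. hs p * sgn (q - p))" if [measurable]: "A \<in> sets borel" for A
    unfolding set_borel_measurable_def hs_def by measurable
  have uci: "set_integrable lborel A uc" if "A \<in> sets borel" "A \<subseteq> {0<..}" for A
  proof (rule int_by[OF _ muc[OF that(1)]])
    show "set_integrable lborel A (\<lambda>p. U0 p / \<bar>L\<bar>)"
      using set_integrable_subset[OF U0i _ that(2)] that(1) by auto
    show "\<bar>uc x\<bar> \<le> U0 x / \<bar>L\<bar>" if "x \<in> A" for x using ucle \<open>A \<subseteq> _\<close> that by auto
  qed
  have hsi: "set_integrable lborel A hs" if "A \<in> sets borel" "A \<subseteq> {0<..}" for A
  proof (rule int_by[OF _ mhs[OF that(1)]])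
    show "set_integrable lborel A (\<lambda>p. p^(n-1) * exp(-p\<^sup>2/s))"
      using gauss_set_int[OF s] that(1) by auto
    show "\<bar>hs x\<bar> \<le> x^(n-1) * exp(-x\<^sup>2/s)" if "x \<in> A" for x using hsle \<open>A \<subseteq> _\<close> that by auto
  qed
  have ki: "set_integrable lborel A (\<lambda>p. hs p * sgn (q - p))" if "A \<in> sets borel" "A \<subseteq> {0<..}" for A
  proof (rule int_by[OF _ mk[OF that(1)]])
    show "set_integrable lborel A (\<lambda>p. p^(n-1) * exp(-p\<^sup>2/s))"
      using gauss_set_int[OF s] that(1) by auto
    show "\<bar>hs x * sgn (q - x)\<bar> \<le> x^(n-1) * exp(-x\<^sup>2/s)" if "x \<in> A" for x
      using hsle[of x] \<open>A \<subseteq> _\<close> that by (auto simp: abs_mult abs_sgn_eq)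
  qed
  have fi: "set_integrable lborel A f" if "A \<in> sets borel" "A \<subseteq> {0<..}" for A
    unfolding f_def using uci[OF that] hsi[OF that] by (rule set_integral_diff(1))
  have Gq: "\<bar>G q\<bar> \<le> q^(n+1) * exp(-q\<^sup>2/s) / \<bar>L\<bar>"
    unfolding G_def using q by (simp add: abs_mult)
  have Gbound: "\<forall>\<^sub>F p in F. norm (G p) \<le> p^(n+1) * exp(-p\<^sup>2/s) / \<bar>L\<bar>"
    if "\<forall>\<^sub>F p in F. p > 0" for F
    using that
  proof eventually_elim
    case (elim p)
    have "norm (G p) = p^(n+1) * exp(-p\<^sup>2/s) * \<bar>cos(L*(1/q-1/p))\<bar> / \<bar>L\<bar>"
      unfolding G_def using elim by (simp add: abs_mult)
    also have "\<dots> \<le> p^(n+1) * exp(-p\<^sup>2/s) * 1 / \<bar>L\<bar>"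
      by (intro divide_right_mono mult_left_mono) (use elim in auto)
    finally show ?case by simp
  qed
  have G0: "(G \<longlongrightarrow> 0) (at_right 0)"
  proof (rule Lim_null_comparison[OF Gbound])
    show "\<forall>\<^sub>F p in at_right 0. (0::real) < p" by (simp add: eventually_at_right_less)
    have "((\<lambda>p::real. p^(n+1) * exp(-p\<^sup>2/s) / \<bar>L\<bar>) \<longlongrightarrow> 0^(n+1) * exp(-0\<^sup>2/s) / \<bar>L\<bar>) (at_right 0)"
      by (intro tendsto_intros) (use s L in auto)
    then show "((\<lambda>p::real. p^(n+1) * exp(-p\<^sup>2/s) / \<bar>L\<bar>) \<longlongrightarrow> 0) (at_right 0)" by simp
  qed
  have Ginf: "(G \<longlongrightarrow> 0) at_top"
  proof (rule Lim_null_comparison[OF Gbound])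
    show "\<forall>\<^sub>F p in at_top. (0::real) < p" by (simp add: eventually_gt_at_top)
    have "((\<lambda>p::real. p^(n+1) * exp(-p\<^sup>2/s)) \<longlongrightarrow> 0) at_top" using s by real_asymp
    then show "((\<lambda>p::real. p^(n+1) * exp(-p\<^sup>2/s) / \<bar>L\<bar>) \<longlongrightarrow> 0) at_top"
      by (intro tendsto_divide_zero)
  qed
  have Gl: "(G \<longlongrightarrow> G q) (at_left q)" and Gr: "(G \<longlongrightarrow> G q) (at_right q)"
    using continuous_at_imp_continuous_at_within[OF Gc[OF q], of "{..<q}", unfolded continuous_within]
      continuous_at_imp_continuous_at_within[OF Gc[OF q], of "{q<..}", unfolded continuous_within]
    by auto
  have FTC1: "(LBINT x=ereal 0..ereal q. f x) = G q - 0"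
  proof (rule interval_integral_FTC_integrable)
    show "ereal 0 < ereal q" using q by simp
    show "(G has_vector_derivative f x) (at x)" if "ereal 0 < ereal x" "ereal x < ereal q" for x
      using that by (intro Gd) auto
    show "isCont f x" if "ereal 0 < ereal x" "ereal x < ereal q" for x
      using that by (intro fc) auto
    show "set_integrable lborel (einterval (ereal 0) (ereal q)) f"
      by (simp, rule fi) auto
    show "((G \<circ> real_of_ereal) \<longlongrightarrow> 0) (at_right (ereal 0))"
      unfolding ereal_tendsto_simps1 by (rule G0)
    show "((G \<circ> real_of_ereal) \<longlongrightarrow> G q) (at_left (ereal q))"
      unfolding ereal_tendsto_simps1 by (rule Gl)
  qed
  have FTC2: "(LBINT x=ereal q..\<infinity>. f x) = 0 - G q"
  proof (rule interval_integral_FTC_integrable)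
    show "ereal q < \<infinity>" by simp
    show "(G has_vector_derivative f x) (at x)" if "ereal q < ereal x" "ereal x < \<infinity>" for x
      using that q by (intro Gd) auto
    show "isCont f x" if "ereal q < ereal x" "ereal x < \<infinity>" for x
      using that q by (intro fc) auto
    show "set_integrable lborel (einterval (ereal q) \<infinity>) f"
      by (simp, rule fi) (use q in auto)
    show "((G \<circ> real_of_ereal) \<longlongrightarrow> G q) (at_right (ereal q))"
      unfolding ereal_tendsto_simps1 by (rule Gr)
    show "((G \<circ> real_of_ereal) \<longlongrightarrow> 0) (at_left \<infinity>)"
      unfolding ereal_tendsto_simps1 by (rule Ginf)
  qed
  have F1: "(LINT x:{0<..<q}|lborel. f x) = G q"
    using FTC1 q by (simp add: interval_integral_Ioo)
  have F2: "(LINT x:{q<..}|lborel. f x) = - G q"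
    using FTC2 by (simp add: interval_integral_to_infinity_eq)
  have I1: "(LINT x:{0<..<q}|lborel. hs x) = (LINT x:{0<..<q}|lborel. uc x) - G q"
  proof -
    have "(LINT x:{0<..<q}|lborel. hs x) = (LINT x:{0<..<q}|lborel. uc x - f x)"
      unfolding f_def by simp
    also have "\<dots> = (LINT x:{0<..<q}|lborel. uc x) - (LINT x:{0<..<q}|lborel. f x)"
      by (rule set_integral_diff(2)) (auto intro!: uci fi)
    finally show ?thesis using F1 by simp
  qed
  have I2: "(LINT x:{q<..}|lborel. hs x) = (LINT x:{q<..}|lborel. uc x) + G q"
  proof -
    have "(LINT x:{q<..}|lborel. hs x) = (LINT x:{q<..}|lborel. uc x - f x)"
      unfolding f_def by simp
    also have "\<dots> = (LINT x:{q<..}|lborel. uc x) - (LINT x:{q<..}|lborel. f x)"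
      by (rule set_integral_diff(2)) (use q in \<open>auto intro!: uci fi\<close>)
    finally show ?thesis using F2 by simp
  qed
  have UB: "\<bar>LINT x:A|lborel. uc x\<bar> \<le> Ub n s / \<bar>L\<bar>" if "A \<subseteq> {0<..}" for A
  proof -
    have "\<bar>LINT x:A|lborel. uc x\<bar> \<le> (LINT x:{0<..}|lborel. U0 x / \<bar>L\<bar>)"
      by (rule sbound[OF _ that]) (use U0i U0nn ucle that in auto)
    then show ?thesis unfolding Ub by simp
  qed
  have hq: "hs q = 0" unfolding hs_def by simp
  have split: "Jf n s L q = (LINT x:{0<..<q}|lborel. hs x) - (LINT x:{q<..}|lborel. hs x)"
  proof -
    have "Jf n s L q = (LINT p:{0<..}|lborel. hs p * sgn (q - p))"
      unfolding Jf_def hs_def ..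
    also have "{0<..} = {0<..<q} \<union> {q..}" using q by auto
    also have "(LINT p:{0<..<q} \<union> {q..}|lborel. hs p * sgn (q - p))
        = (LINT p:{0<..<q}|lborel. hs p * sgn (q - p)) + (LINT p:{q..}|lborel. hs p * sgn (q - p))"
      by (rule set_integral_Un) (use q in \<open>auto intro!: ki\<close>)
    also have "(LINT p:{0<..<q}|lborel. hs p * sgn (q - p)) = (LINT p:{0<..<q}|lborel. hs p)"
      by (rule set_lebesgue_integral_cong) auto
    also have "(LINT p:{q..}|lborel. hs p * sgn (q - p)) = (LINT p:{q..}|lborel. - hs p)"
      by (rule set_lebesgue_integral_cong) (auto simp: hq sgn_if)
    also have "(LINT p:{q..}|lborel. - hs p) = - (LINT p:{q..}|lborel. hs p)"
      by (rule set_integral_minus')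
    also have "(LINT p:{q..}|lborel. hs p) = (LINT p:{q<..}|lborel. hs p)"
      by (rule set_integral_cong_set) (auto intro!: mhs eventually_mono[OF AE_lborel_singleton[of q]])
    finally show ?thesis by simp
  qed
  have "\<bar>Jf n s L q\<bar> \<le> \<bar>LINT x:{0<..<q}|lborel. uc x\<bar> + \<bar>G q\<bar> + (\<bar>LINT x:{q<..}|lborel. uc x\<bar> + \<bar>G q\<bar>)"
    unfolding split I1 I2 by linarith
  also have "\<dots> \<le> Ub n s / \<bar>L\<bar> + q^(n+1) * exp(-q\<^sup>2/s) / \<bar>L\<bar> + (Ub n s / \<bar>L\<bar> + q^(n+1) * exp(-q\<^sup>2/s) / \<bar>L\<bar>)"
    by (intro add_mono UB Gq) (use q in auto)
  also have "\<dots> = (2 * Ub n s + 2 * (q^(n+1) * exp(-q\<^sup>2/s))) / \<bar>L\<bar>"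
    unfolding add_divide_distrib by simp
  finally show ?thesis .
qed

lemma Ub_nonneg: assumes "s > 0" shows "0 \<le> Ub n s"
  unfolding Ub_def set_lebesgue_integral_def
  by (rule Bochner_Integration.integral_nonneg) (use assms in \<open>auto simp: indicator_def\<close>)

lemma Psi_bound:
  assumes n: "n \<ge> 1" and \<sigma>: "\<sigma> > 0"
  shows "\<exists>M. \<forall>L. L \<noteq> 0 \<longrightarrow> \<bar>Psi n \<sigma> L\<bar> \<le> M / \<bar>L\<bar>"
proof -
  define s where "s = 2 * \<sigma>\<^sup>2"
  have s: "s > 0" using \<sigma> by (simp add: s_def)
  define g where "g = (\<lambda>q::real. 2 * Ub n s * (q^n * exp(-q\<^sup>2/s)) + 2 * (q^(2*n+1) * exp(-q\<^sup>2/s)))"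
  have gi: "set_integrable lborel {0<..} g"
    unfolding g_def by (intro set_integral_add(1) set_integrable_mult_right gauss_set_int) (use s in auto)
  have g0: "0 \<le> g q" if "q > 0" for q
    unfolding g_def using that s Ub_nonneg[OF s, of n] by (intro add_nonneg_nonneg mult_nonneg_nonneg) auto
  show ?thesis
  proof (intro exI allI impI)
    fix L :: real assume L: "L \<noteq> 0"
    have "\<bar>Psi n \<sigma> L\<bar> = \<bar>LINT q:{0<..}|lborel. q^n * exp(-q\<^sup>2/s) * Jf n s L q\<bar>"
      unfolding Psi_J[OF n] s_def by simp
    also have "\<dots> \<le> (LINT q:{0<..}|lborel. g q / \<bar>L\<bar>)"
    proof (rule sbound)
      show "set_integrable lborel {0<..} (\<lambda>q. g q / \<bar>L\<bar>)" using gi by auto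
      show "0 \<le> g q / \<bar>L\<bar>" if "q \<in> {0<..}" for q using g0[of q] that by auto
      show "\<bar>q^n * exp(-q\<^sup>2/s) * Jf n s L q\<bar> \<le> g q / \<bar>L\<bar>" if "q \<in> {0<..}" for q
      proof -
        have q: "q > 0" using that by auto
        have e1: "exp(-q\<^sup>2/s) \<le> 1" using s by auto
        have a0: "0 \<le> q^n * exp(-q\<^sup>2/s)" using q by auto
        have pq: "q^n * q^(n+1) = q^(2*n+1)" by (simp add: power_add[symmetric] mult_2)
        have "\<bar>q^n * exp(-q\<^sup>2/s) * Jf n s L q\<bar> = q^n * exp(-q\<^sup>2/s) * \<bar>Jf n s L q\<bar>"
          using q by (simp add: abs_mult)
        also have "\<dots> \<le> q^n * exp(-q\<^sup>2/s) * ((2 * Ub n s + 2 * (q^(n+1) * exp(-q\<^sup>2/s))) / \<bar>L\<bar>)"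
          by (intro mult_left_mono Jf_bound n s L q a0)
        also have "\<dots> = (2 * Ub n s * (q^n * exp(-q\<^sup>2/s)) + 2 * (q^(2*n+1) * (exp(-q\<^sup>2/s) * exp(-q\<^sup>2/s)))) / \<bar>L\<bar>"
          unfolding times_divide_eq_right pq[symmetric] by (simp add: algebra_simps)
        also have "\<dots> \<le> g q / \<bar>L\<bar>"
        proof -
          have "exp(-q\<^sup>2/s) * exp(-q\<^sup>2/s) \<le> 1 * exp(-q\<^sup>2/s)"
            by (rule mult_right_mono[OF e1]) simp
          then have "q^(2*n+1) * (exp(-q\<^sup>2/s) * exp(-q\<^sup>2/s)) \<le> q^(2*n+1) * exp(-q\<^sup>2/s)"
            using q by (intro mult_left_mono) auto
          then show ?thesis unfolding g_def by (intro divide_right_mono) auto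
        qed
        finally show ?thesis .
      qed
    qed auto
    also have "\<dots> = (LINT q:{0<..}|lborel. g q) / \<bar>L\<bar>" by simp
    finally show "\<bar>Psi n \<sigma> L\<bar> \<le> (LINT q:{0<..}|lborel. g q) / \<bar>L\<bar>" .
  qed
qed




lemma sinc_lim: "((\<lambda>t::real. sin (t * c) / t) \<longlongrightarrow> c) (at 0)"
proof -
  have "((\<lambda>t::real. sin (t * c)) has_real_derivative c) (at 0)"
    by (rule derivative_eq_intros refl | simp)+
  then show ?thesis unfolding has_field_derivative_iff by simp
qed

definition Jl :: "nat \<Rightarrow> real \<Rightarrow> real \<Rightarrow> real" where
  "Jl n s q = (LINT p:{0<..}|lborel. p^(n-1) * exp(-p\<^sup>2/s) * (1/q - 1/p) * sgn(q-p))"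

lemma meas_pair_Jf: "(\<lambda>(q::real, p::real). indicat_real {0<..} p *\<^sub>R
   (p^(n-1) * exp(-p\<^sup>2/s) * sin(L*(1/q-1/p)) * sgn(q-p))) \<in> borel_measurable (lborel \<Otimes>\<^sub>M lborel)"
  by measurable

lemma meas_pair_Jl: "(\<lambda>(q::real, p::real). indicat_real {0<..} p *\<^sub>R
   (p^(n-1) * exp(-p\<^sup>2/s) * (1/q - 1/p) * sgn(q-p))) \<in> borel_measurable (lborel \<Otimes>\<^sub>M lborel)"
  by measurable

lemma meas_Jf[measurable]: "Jf n s L \<in> borel_measurable borel"
proof -
  have "(\<lambda>q. Jf n s L q) \<in> borel_measurable lborel"
    unfolding Jf_def set_lebesgue_integral_def
    by (rule lborel.borel_measurable_lebesgue_integral[OF meas_pair_Jf])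
  then show ?thesis by simp
qed

lemma meas_Jl[measurable]: "Jl n s \<in> borel_measurable borel"
proof -
  have "(\<lambda>q. Jl n s q) \<in> borel_measurable lborel"
    unfolding Jl_def set_lebesgue_integral_def
    by (rule lborel.borel_measurable_lebesgue_integral[OF meas_pair_Jl])
  then show ?thesis by simp
qed

lemma Jf_div: "Jf n s L q / L = (LINT p:{0<..}|lborel. p^(n-1) * exp(-p\<^sup>2/s) * (sin(L*(1/q-1/p)) / L) * sgn(q-p))"
  unfolding Jf_def set_integral_divide_zero[symmetric] by (simp add: field_simps)

lemma pow_pred: "n \<ge> 2 \<Longrightarrow> (p::real)^(n-1) = p^(n-2) * p"
  by (cases n; cases "n - 1") auto

lemma inner_lim:
  assumes n: "n \<ge> 2" and s: "s > 0" and q: "q > 0"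
  shows "((\<lambda>L. Jf n s L q / L) \<longlongrightarrow> Jl n s q) (at 0)"
    and "set_integrable lborel {0<..} (\<lambda>p. p^(n-1) * exp(-p\<^sup>2/s) * (1/q - 1/p) * sgn(q-p))"
proof -
  let ?s = "\<lambda>t p. p^(n-1) * exp(-p\<^sup>2/s) * (sin(t*(1/q-1/p)) / t) * sgn(q-p)"
  let ?f = "\<lambda>p. p^(n-1) * exp(-p\<^sup>2/s) * (1/q - 1/p) * sgn(q-p)"
  let ?w = "\<lambda>p. 1/q * (p^(n-1) * exp(-p\<^sup>2/s)) + p^(n-2) * exp(-p\<^sup>2/s)"
  have ms: "set_borel_measurable lborel {0<..} (?s t)" for t
    unfolding set_borel_measurable_def by measurable
  have mf: "set_borel_measurable lborel {0<..} ?f"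
    unfolding set_borel_measurable_def by measurable
  have wi: "set_integrable lborel {0<..} ?w"
    by (intro set_integral_add(1) set_integrable_mult_right gauss_set_int) (use s in auto)
  have lim: "((\<lambda>t. ?s t x) \<longlongrightarrow> ?f x) (at 0)" if "x \<in> {0<..}" for x
    by (intro tendsto_intros sinc_lim)
  have bnd: "\<bar>?s t x\<bar> \<le> ?w x" if t: "t \<noteq> 0" and x: "x \<in> {0<..}" for t x
  proof -
    have x0: "x > 0" using x by auto
    have h0: "0 \<le> x^(n-1) * exp(-x\<^sup>2/s)" using x0 by auto
    have "\<bar>sin(t*(1/q-1/x)) / t\<bar> \<le> \<bar>1/q - 1/x\<bar>"
    proof -
      have "\<bar>sin(t*(1/q-1/x))\<bar> \<le> \<bar>t\<bar> * \<bar>1/q-1/x\<bar>"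
        using abs_sin_x_le_abs_x[of "t*(1/q-1/x)"] by (simp add: abs_mult)
      then show ?thesis using t by (simp add: divide_le_eq mult.commute)
    qed
    also have "\<dots> \<le> 1/q + 1/x" using q x0 by (simp add: abs_le_iff)
    finally have sb: "\<bar>sin(t*(1/q-1/x)) / t\<bar> \<le> 1/q + 1/x" .
    have "\<bar>?s t x\<bar> \<le> x^(n-1) * exp(-x\<^sup>2/s) * \<bar>sin(t*(1/q-1/x)) / t\<bar> * 1"
      using h0 x0 by (simp add: abs_mult abs_sgn_eq mult_left_le)
    also have "\<dots> \<le> x^(n-1) * exp(-x\<^sup>2/s) * (1/q + 1/x)"
      using mult_left_mono[OF sb h0] by simp
    also have "\<dots> = ?w x"
      unfolding pow_pred[OF n] using x0 by (simp add: field_simps)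
    finally show ?thesis .
  qed
  note D = dct_at0[of "{0<..}" ?s ?f ?w, OF ms mf wi lim bnd]
  show "set_integrable lborel {0<..} ?f" by (rule D(2))
  show "((\<lambda>L. Jf n s L q / L) \<longlongrightarrow> Jl n s q) (at 0)"
    unfolding Jf_div Jl_def by (rule D(1))
qed


lemma Jdiv_bound:
  assumes n: "n \<ge> 2" and s: "s > 0" and q: "q > 0" and t: "t \<noteq> 0"
  shows "\<bar>Jf n s t q / t\<bar> \<le> 1/q * (LINT p:{0<..}|lborel. p^(n-1) * exp(-p\<^sup>2/s)) + (LINT p:{0<..}|lborel. p^(n-2) * exp(-p\<^sup>2/s))"
proof -
  let ?w = "\<lambda>p. 1/q * (p^(n-1) * exp(-p\<^sup>2/s)) + p^(n-2) * exp(-p\<^sup>2/s)"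
  have "\<bar>Jf n s t q / t\<bar> \<le> (LINT p:{0<..}|lborel. ?w p)"
    unfolding Jf_div
  proof (rule sbound)
    show "set_integrable lborel {0<..} ?w"
      by (intro set_integral_add(1) set_integrable_mult_right gauss_set_int) (use s in auto)
    show "0 \<le> ?w x" if "x \<in> {0<..}" for x using that q by auto
    show "\<bar>x^(n-1) * exp(-x\<^sup>2/s) * (sin(t*(1/q-1/x)) / t) * sgn(q-x)\<bar> \<le> ?w x" if x: "x \<in> {0<..}" for x
    proof -
      have x0: "x > 0" using x by auto
      have h0: "0 \<le> x^(n-1) * exp(-x\<^sup>2/s)" using x0 by auto
      have "\<bar>sin(t*(1/q-1/x)) / t\<bar> \<le> \<bar>1/q - 1/x\<bar>"
      proof -
        have "\<bar>sin(t*(1/q-1/x))\<bar> \<le> \<bar>t\<bar> * \<bar>1/q-1/x\<bar>"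
          using abs_sin_x_le_abs_x[of "t*(1/q-1/x)"] by (simp add: abs_mult)
        then show ?thesis using t by (simp add: divide_le_eq mult.commute)
      qed
      also have "\<dots> \<le> 1/q + 1/x" using q x0 by (simp add: abs_le_iff)
      finally have sb: "\<bar>sin(t*(1/q-1/x)) / t\<bar> \<le> 1/q + 1/x" .
      have "\<bar>x^(n-1) * exp(-x\<^sup>2/s) * (sin(t*(1/q-1/x)) / t) * sgn(q-x)\<bar> \<le> x^(n-1) * exp(-x\<^sup>2/s) * \<bar>sin(t*(1/q-1/x)) / t\<bar> * 1"
        using h0 x0 by (simp add: abs_mult abs_sgn_eq mult_left_le)
      also have "\<dots> \<le> x^(n-1) * exp(-x\<^sup>2/s) * (1/q + 1/x)"
        using mult_left_mono[OF sb h0] by simp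
      also have "\<dots> = ?w x"
        unfolding pow_pred[OF n] using x0 by (simp add: field_simps)
      finally show ?thesis .
    qed
  qed auto
  also have "(LINT p:{0<..}|lborel. ?w p) = 1/q * (LINT p:{0<..}|lborel. p^(n-1) * exp(-p\<^sup>2/s)) + (LINT p:{0<..}|lborel. p^(n-2) * exp(-p\<^sup>2/s))"
  proof -
    have i1: "set_integrable lborel {0<..} (\<lambda>p. 1/q * (p^(n-1) * exp(-p\<^sup>2/s)))"
      by (intro set_integrable_mult_right gauss_set_int) (use s in auto)
    have i2: "set_integrable lborel {0<..} (\<lambda>p. p^(n-2) * exp(-p\<^sup>2/s))"
      by (rule gauss_set_int) (use s in auto)
    show ?thesis by (simp only: set_integral_add(2)[OF i1 i2] set_integral_mult_right)
  qed
  finally show ?thesis .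
qed

lemma outer_lim:
  assumes n: "n \<ge> 2" and s: "s > 0"
  shows "((\<lambda>L. LINT q:{0<..}|lborel. q^n * exp(-q\<^sup>2/s) * (Jf n s L q / L)) \<longlongrightarrow>
          (LINT q:{0<..}|lborel. q^n * exp(-q\<^sup>2/s) * Jl n s q)) (at 0)"
    and "set_integrable lborel {0<..} (\<lambda>q. q^n * exp(-q\<^sup>2/s) * Jl n s q)"
proof -
  define B0 where "B0 = (LINT p:{0<..}|lborel. p^(n-1) * exp(-p\<^sup>2/s))"
  define B1 where "B1 = (LINT p:{0<..}|lborel. p^(n-2) * exp(-p\<^sup>2/s))"
  let ?s = "\<lambda>t q. q^n * exp(-q\<^sup>2/s) * (Jf n s t q / t)"
  let ?f = "\<lambda>q. q^n * exp(-q\<^sup>2/s) * Jl n s q"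
  let ?w = "\<lambda>q. B0 * (q^(n-1) * exp(-q\<^sup>2/s)) + B1 * (q^n * exp(-q\<^sup>2/s))"
  have ms: "set_borel_measurable lborel {0<..} (?s t)" for t
    unfolding set_borel_measurable_def by measurable
  have mf: "set_borel_measurable lborel {0<..} ?f"
    unfolding set_borel_measurable_def by measurable
  have wi: "set_integrable lborel {0<..} ?w"
    by (intro set_integral_add(1) set_integrable_mult_right gauss_set_int) (use s in auto)
  have lim: "((\<lambda>t. ?s t x) \<longlongrightarrow> ?f x) (at 0)" if "x \<in> {0<..}" for x
    using that by (intro tendsto_intros inner_lim(1)[OF n s]) auto
  have bnd: "\<bar>?s t x\<bar> \<le> ?w x" if t: "t \<noteq> 0" and x: "x \<in> {0<..}" for t x
  proof -
    have x0: "x > 0" using x by auto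
    have a0: "0 \<le> x^n * exp(-x\<^sup>2/s)" using x0 by auto
    have "\<bar>?s t x\<bar> = x^n * exp(-x\<^sup>2/s) * \<bar>Jf n s t x / t\<bar>"
      using x0 by (simp add: abs_mult)
    also have "\<dots> \<le> x^n * exp(-x\<^sup>2/s) * (1/x * B0 + B1)"
      unfolding B0_def B1_def by (intro mult_left_mono Jdiv_bound n s x0 t a0)
    also have "\<dots> = ?w x"
    proof -
      have "x^n = x^(n-1) * x" using n by (cases n) auto
      then show ?thesis using x0 by (simp add: field_simps)
    qed
    finally show ?thesis .
  qed
  note D = dct_at0[of "{0<..}" ?s ?f ?w, OF ms mf wi lim bnd]
  show "set_integrable lborel {0<..} ?f" by (rule D(2))
  show "((\<lambda>L. LINT q:{0<..}|lborel. q^n * exp(-q\<^sup>2/s) * (Jf n s L q / L)) \<longlongrightarrow>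
          (LINT q:{0<..}|lborel. q^n * exp(-q\<^sup>2/s) * Jl n s q)) (at 0)"
    by (rule D(1))
qed

lemma Jl_neg:
  assumes n: "n \<ge> 2" and s: "s > 0" and q: "q > 0"
  shows "Jl n s q < 0"
proof -
  have i: "set_integrable lborel {0<..} (\<lambda>p. p^(n-1) * exp(-p\<^sup>2/s) * (1/q - 1/p) * sgn(q-p))"
    by (rule inner_lim(2)[OF n s q])
  have "0 < (LINT p:{0<..}|lborel. (-1) * (p^(n-1) * exp(-p\<^sup>2/s) * (1/q - 1/p) * sgn(q-p)))"
  proof (rule spos)
    show "set_integrable lborel {0<..} (\<lambda>p. (-1) * (p^(n-1) * exp(-p\<^sup>2/s) * (1/q - 1/p) * sgn(q-p)))"
      using i by (rule set_integrable_mult_right)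
    have key: "0 < (-1) * ((1/q - 1/x) * sgn(q-x))" if "0 < x" "x \<noteq> q" for x
    proof (cases "x < q")
      case True
      then have "1/q < 1/x" using that q by (simp add: frac_less2)
      then show ?thesis using True by simp
    next
      case False
      then have "q < x" using that by auto
      then have "1/x < 1/q" using that q by (simp add: frac_less2)
      then show ?thesis using \<open>q < x\<close> by simp
    qed
    show "0 < (-1) * (x^(n-1) * exp(-x\<^sup>2/s) * (1/q - 1/x) * sgn(q-x))" if "0 < x" "x \<noteq> q" for x
    proof -
      have "0 < x^(n-1) * exp(-x\<^sup>2/s)" using that by auto
      then have "0 < x^(n-1) * exp(-x\<^sup>2/s) * ((-1) * ((1/q - 1/x) * sgn(q-x)))"
        using key[OF that] by (rule mult_pos_pos)
      then show ?thesis by (simp add: mult_ac)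
    qed
    show "0 \<le> (-1) * (x^(n-1) * exp(-x\<^sup>2/s) * (1/q - 1/x) * sgn(q-x))" if "0 < x" for x
    proof (cases "x = q")
      case True then show ?thesis by simp
    next
      case False
      have "0 < x^(n-1) * exp(-x\<^sup>2/s)" using that by auto
      then have "0 < x^(n-1) * exp(-x\<^sup>2/s) * ((-1) * ((1/q - 1/x) * sgn(q-x)))"
        using key[OF that False] by (rule mult_pos_pos)
      then show ?thesis by (simp add: mult_ac)
    qed
  qed
  then show ?thesis unfolding Jl_def set_integral_mult_right by simp
qed



lemma Psi_deriv:
  assumes n: "n \<ge> 2" and \<sigma>: "\<sigma> > 0"
  shows "(Psi n \<sigma> has_real_derivative
           (- (LINT q:{0<..}|lborel. q^n * exp(-q\<^sup>2/(2*\<sigma>\<^sup>2)) * Jl n (2*\<sigma>\<^sup>2) q))) (at 0)"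
    and "0 < - (LINT q:{0<..}|lborel. q^n * exp(-q\<^sup>2/(2*\<sigma>\<^sup>2)) * Jl n (2*\<sigma>\<^sup>2) q)"
proof -
  define s where "s = 2*\<sigma>\<^sup>2"
  have s: "s > 0" using \<sigma> by (simp add: s_def)
  have n1: "n \<ge> 1" using n by simp
  have eq: "(\<lambda>y. (Psi n \<sigma> y - Psi n \<sigma> 0) / (y - 0)) =
      (\<lambda>y. - (LINT q:{0<..}|lborel. q^n * exp(-q\<^sup>2/s) * (Jf n s y q / y)))"
  proof
    fix y :: real
    have "(Psi n \<sigma> y - Psi n \<sigma> 0) / (y - 0) = - ((LINT q:{0<..}|lborel. q^n * exp(-q\<^sup>2/s) * Jf n s y q) / y)"
      unfolding Psi_0 Psi_J[OF n1] s_def by simp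
    also have "\<dots> = - (LINT q:{0<..}|lborel. q^n * exp(-q\<^sup>2/s) * Jf n s y q / y)"
      by (simp only: set_integral_divide_zero)
    finally show "(Psi n \<sigma> y - Psi n \<sigma> 0) / (y - 0) = - (LINT q:{0<..}|lborel. q^n * exp(-q\<^sup>2/s) * (Jf n s y q / y))"
      by (simp only: times_divide_eq_right)
  qed
  show "(Psi n \<sigma> has_real_derivative
           (- (LINT q:{0<..}|lborel. q^n * exp(-q\<^sup>2/(2*\<sigma>\<^sup>2)) * Jl n (2*\<sigma>\<^sup>2) q))) (at 0)"
    unfolding has_field_derivative_iff eq s_def[symmetric]
    by (intro tendsto_minus outer_lim(1)[OF n s])
  have "0 < (LINT q:{0<..}|lborel. (-1) * (q^n * exp(-q\<^sup>2/s) * Jl n s q))"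
  proof (rule spos)
    show "set_integrable lborel {0<..} (\<lambda>q. (-1) * (q^n * exp(-q\<^sup>2/s) * Jl n s q))"
      using outer_lim(2)[OF n s] by (rule set_integrable_mult_right)
    have pos: "0 < (-1) * (x^n * exp(-x\<^sup>2/s) * Jl n s x)" if "0 < x" "x \<noteq> 0" for x
    proof -
      have "0 < x^n * exp(-x\<^sup>2/s)" using that by auto
      moreover have "Jl n s x < 0" using Jl_neg[OF n s] that by auto
      ultimately have "x^n * exp(-x\<^sup>2/s) * Jl n s x < 0" by (simp add: mult_pos_neg)
      then show ?thesis by simp
    qed
    show "0 < (-1) * (x^n * exp(-x\<^sup>2/s) * Jl n s x)" if "0 < x" "x \<noteq> 0" for x
      using pos that by blast
    show "0 \<le> (-1) * (x^n * exp(-x\<^sup>2/s) * Jl n s x)" if "0 < x" for x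
      using pos[of x] that by simp
  qed
  then show "0 < - (LINT q:{0<..}|lborel. q^n * exp(-q\<^sup>2/(2*\<sigma>\<^sup>2)) * Jl n (2*\<sigma>\<^sup>2) q)"
    unfolding set_integral_mult_right s_def by simp
qed

theorem mainTheorem5:
  fixes \<alpha> hb \<sigma> :: real and n :: nat
  assumes "\<alpha> > 0" and "hb > 0" and "\<sigma> > 0" and "n \<ge> 2"
  shows "Eexp \<alpha> hb \<sigma> n 0 = 0
     \<and> (\<exists>D. (Eexp \<alpha> hb \<sigma> n has_real_derivative D) (at 0) \<and> D > 0)
     \<and> (\<forall>\<tau>. Eexp \<alpha> hb \<sigma> n (-\<tau>) = - Eexp \<alpha> hb \<sigma> n \<tau>)
     \<and> (Eexp \<alpha> hb \<sigma> n \<longlongrightarrow> 0) at_top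
     \<and> (Eexp \<alpha> hb \<sigma> n \<longlongrightarrow> 0) at_bot"
proof -
  note a = assms(1) and h = assms(2) and sg = assms(3) and n = assms(4)
  have n1: "n \<ge> 1" using n by simp
  define C where "C = \<alpha> / hb * (NG \<sigma> n)\<^sup>2"
  have NG: "NG \<sigma> n > 0"
    unfolding NG_def using sg by (intro real_sqrt_gt_zero divide_pos_pos mult_pos_pos Gamma_real_pos) auto
  have C: "C > 0" unfolding C_def using a h NG by auto
  have E: "Eexp \<alpha> hb \<sigma> n = (\<lambda>\<tau>. C * Psi n \<sigma> (\<alpha>\<^sup>2 * \<tau> / hb))"
    unfolding C_def by (rule ext) (rule Eexp_Psi)
  have i: "Eexp \<alpha> hb \<sigma> n 0 = 0" unfolding E by (simp add: Psi_0)
  have iii: "\<forall>\<tau>. Eexp \<alpha> hb \<sigma> n (-\<tau>) = - Eexp \<alpha> hb \<sigma> n \<tau>"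
  proof
    fix \<tau> :: real
    have "\<alpha>\<^sup>2 * (-\<tau>) / hb = - (\<alpha>\<^sup>2 * \<tau> / hb)" by simp
    then show "Eexp \<alpha> hb \<sigma> n (-\<tau>) = - Eexp \<alpha> hb \<sigma> n \<tau>"
      unfolding E by (simp add: Psi_odd[OF n1])
  qed
  define D where "D = - (LINT q:{0<..}|lborel. q^n * exp(-q\<^sup>2/(2*\<sigma>\<^sup>2)) * Jl n (2*\<sigma>\<^sup>2) q)"
  have dP: "(Psi n \<sigma> has_real_derivative D) (at 0)" and D: "D > 0"
    unfolding D_def using Psi_deriv[OF n sg] by auto
  have dg: "((\<lambda>\<tau>. \<alpha>\<^sup>2 * \<tau> / hb) has_real_derivative \<alpha>\<^sup>2 / hb) (at 0)"
    apply (rule derivative_eq_intros refl | use h in force)+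
    done
  have dP': "(Psi n \<sigma> has_real_derivative D) (at ((\<lambda>\<tau>. \<alpha>\<^sup>2 * \<tau> / hb) 0))" using dP by simp
  have "((\<lambda>\<tau>. C * (Psi n \<sigma> \<circ> (\<lambda>\<tau>. \<alpha>\<^sup>2 * \<tau> / hb)) \<tau>) has_real_derivative C * (D * (\<alpha>\<^sup>2 / hb))) (at 0)"
    by (intro DERIV_cmult DERIV_chain dP' dg)
  then have ii: "(Eexp \<alpha> hb \<sigma> n has_real_derivative C * (D * (\<alpha>\<^sup>2 / hb))) (at 0)"
    unfolding E by (simp add: o_def)
  have Dpos: "C * (D * (\<alpha>\<^sup>2 / hb)) > 0" using C D a h by auto
  obtain M where M: "\<And>L. L \<noteq> 0 \<Longrightarrow> \<bar>Psi n \<sigma> L\<bar> \<le> M / \<bar>L\<bar>"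
    using Psi_bound[OF n1 sg] by blast
  have bnd: "norm (Eexp \<alpha> hb \<sigma> n \<tau>) \<le> (C * M * hb / \<alpha>\<^sup>2) / \<bar>\<tau>\<bar>" if "\<tau> \<noteq> 0" for \<tau>
  proof -
    have L: "\<alpha>\<^sup>2 * \<tau> / hb \<noteq> 0" using that a h by simp
    have "norm (Eexp \<alpha> hb \<sigma> n \<tau>) = C * \<bar>Psi n \<sigma> (\<alpha>\<^sup>2 * \<tau> / hb)\<bar>"
      unfolding E using C by (simp add: abs_mult)
    also have "\<dots> \<le> C * (M / \<bar>\<alpha>\<^sup>2 * \<tau> / hb\<bar>)"
      using M[OF L] C by (intro mult_left_mono) auto
    also have "\<dots> = (C * M * hb / \<alpha>\<^sup>2) / \<bar>\<tau>\<bar>"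
      using a h that by (simp add: abs_mult field_simps)
    finally show ?thesis .
  qed
  have iv: "(Eexp \<alpha> hb \<sigma> n \<longlongrightarrow> 0) at_top"
  proof (rule Lim_null_comparison)
    show "\<forall>\<^sub>F \<tau> in at_top. norm (Eexp \<alpha> hb \<sigma> n \<tau>) \<le> (C * M * hb / \<alpha>\<^sup>2) / \<bar>\<tau>\<bar>"
      using eventually_gt_at_top[of 0] by eventually_elim (intro bnd, simp)
    show "((\<lambda>\<tau>::real. (C * M * hb / \<alpha>\<^sup>2) / \<bar>\<tau>\<bar>) \<longlongrightarrow> 0) at_top" by real_asymp
  qed
  have v: "(Eexp \<alpha> hb \<sigma> n \<longlongrightarrow> 0) at_bot"
  proof (rule Lim_null_comparison)
    show "\<forall>\<^sub>F \<tau> in at_bot. norm (Eexp \<alpha> hb \<sigma> n \<tau>) \<le> (C * M * hb / \<alpha>\<^sup>2) / \<bar>\<tau>\<bar>"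
      using eventually_at_bot_not_equal[of 0] by eventually_elim (rule bnd)
    show "((\<lambda>\<tau>::real. (C * M * hb / \<alpha>\<^sup>2) / \<bar>\<tau>\<bar>) \<longlongrightarrow> 0) at_bot" by real_asymp
  qed
  show ?thesis using i ii Dpos iii iv v by blast
qed

end
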